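(* Let $V$ be a real vector space, let $v_1,\ldots,v_d\in V$ be linearly independent, and for $i=0,\ldots,d$ let $\sigma^i=S(v_1,\ldots,v_i)$ and $\tau^{d-i}=S(v_{i+1},\ldots,v_d)$. Let $a,b>0$ and define \[A_i=a\sigma^i+b\tau^{d-i}+b(v_1+\cdots+v_i)\ (i\geqslant 0),\qquad B_i=a\sigma^{i-1}+b\tau^{d-i}+b(v_1+\cdots+v_i)\ (i\geqslant1).\] Then $(a+b)\sigma^d=A_0\cup\cdots\cup A_d$, and $(A_0\cup\cdots\cup A_{i-1})\cap A_i=B_i$ for $i\geqslant1$. Consequently, if $\varphi$ is a translation-invariant valuation on $\mathcal{K}(V)$ (with values in an abelian group), then \[\varphi((a+b)\sigma^d)=\sum_{i=0}^d\varphi(a\sigma^i+b\tau^{d-i})-\sum_{i=1}^d\varphi(a\sigma^{i-1}+b\tau^{d-i}).\]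
   Context: For linearly independent $w_1,\ldots,w_k$, $S(w_1,\ldots,w_k)=\{x_1w_1+\cdots+x_kw_k\mid 1\geqslant x_1\geqslant\cdots\geqslant x_k\geqslant0\}$, the $k$-simplex with vertices $0,w_1,w_1+w_2,\ldots,w_1+\cdots+w_k$; for $k=0$ it is $\{0\}$. Sums of sets are Minkowski sums, and adding a vector means translation. $\mathcal{K}(V)$ is the set of nonempty compact convex subsets of $V$; a valuation satisfies $\varphi(B\cup C)=\varphi(B)+\varphi(C)-\varphi(B\cap C)$ whenever $B,C,B\cup C\in\mathcal{K}(V)$. *)

theory Defs
  imports "HOL-Analysis.Analysis" "HOL-Library.Set_Algebras"
begin

text \<open>The simplex S(w_1,...,w_k) = {x_1 w_1 + ... + x_k w_k | 1 >= x_1 >= ... >= x_k >= 0},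
  for a list ws = [w_1,...,w_k]; for k = 0 this is {0}.\<close>
definition simplexS :: "'a::real_vector list \<Rightarrow> 'a set" where
  "simplexS ws = {(\<Sum>j<length ws. x j *\<^sub>R (ws ! j)) | x.
      (\<forall>j<length ws. 0 \<le> x j \<and> x j \<le> 1) \<and>
      (\<forall>j. Suc j < length ws \<longrightarrow> x (Suc j) \<le> x j)}"

text \<open>Nonempty compact convex sets.\<close>
definition Kset :: "'a::real_normed_vector set set" where
  "Kset = {K. K \<noteq> {} \<and> compact K \<and> convex K}"

definition is_valuation :: "('a::real_normed_vector set \<Rightarrow> 'g::ab_group_add) \<Rightarrow> bool" where
  "is_valuation \<phi> \<longleftrightarrow> (\<forall>B C. B \<in> Kset \<longrightarrow> C \<in> Kset \<longrightarrow> B \<union> C \<in> Kset \<longrightarrow>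
      \<phi> (B \<union> C) = \<phi> B + \<phi> C - \<phi> (B \<inter> C))"

definition translation_invariant :: "('a::real_normed_vector set \<Rightarrow> 'g) \<Rightarrow> bool" where
  "translation_invariant \<phi> \<longleftrightarrow> (\<forall>K \<in> Kset. \<forall>x. \<phi> ((\<lambda>y. x + y) ` K) = \<phi> K)"

end

theory Submission
  imports Defs
begin

definition Lc :: "'a::real_vector list \<Rightarrow> (nat \<Rightarrow> real) \<Rightarrow> 'a" where
  "Lc vs y = (\<Sum>j<length vs. y j *\<^sub>R vs ! j)"

lemma Lc_add: "Lc vs (\<lambda>j. f j + g j) = Lc vs f + Lc vs g"
  by (simp add: Lc_def scaleR_add_left sum.distrib)

lemma Lc_diff: "Lc vs (\<lambda>j. f j - g j) = Lc vs f - Lc vs g"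
  by (simp add: Lc_def scaleR_diff_left sum_subtractf)

lemma Lc_scale: "Lc vs (\<lambda>j. u * f j) = u *\<^sub>R Lc vs f"
  by (simp add: Lc_def scaleR_sum_right)

lemma Lc_inj:
  assumes "distinct vs" "independent (set vs)" "Lc vs y = Lc vs y'" "j < length vs"
  shows "y j = y' j"
proof -
  define c where "c = (\<lambda>j. y j - y' j)"
  define g where "g = the_inv_into {..<length vs} (nth vs)"
  have inj: "inj_on (nth vs) {..<length vs}" using assms(1) by (simp add: inj_on_nth)
  have im: "nth vs ` {..<length vs} = set vs" by (auto simp: set_conv_nth)
  have gv: "g (vs ! k) = k" if "k < length vs" for k
    unfolding g_def using the_inv_into_f_f[OF inj] that by auto
  have "(\<Sum>v\<in>set vs. c (g v) *\<^sub>R v) = (\<Sum>k<length vs. c (g (vs ! k)) *\<^sub>R vs ! k)"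
    by (subst im[symmetric], subst sum.reindex[OF inj]) simp
  also have "\<dots> = (\<Sum>k<length vs. c k *\<^sub>R vs ! k)" using gv by simp
  also have "\<dots> = 0" using Lc_diff[of vs y y'] assms(3) unfolding c_def Lc_def by simp
  finally have "(\<Sum>v\<in>set vs. c (g v) *\<^sub>R v) = 0" .
  then have "\<forall>v\<in>set vs. c (g v) = 0"
    using assms(2) real_vector.dependent_finite[of "set vs"] by auto
  then have "c (g (vs ! j)) = 0" using assms(4) by auto
  then show ?thesis using gv[OF assms(4)] by (simp add: c_def)
qed

lemma dec_mono:
  assumes "\<forall>j. Suc j < n \<longrightarrow> x (Suc j) \<le> (x j :: real)" "i \<le> j" "j < n"
  shows "x j \<le> x i"
  using assms(2,3)
proof (induction j)
  case 0 then show ?case by simp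
next
  case (Suc j)
  show ?case
  proof (cases "i = Suc j")
    case False
    then have "x j \<le> x i" using Suc by simp
    moreover have "x (Suc j) \<le> x j" using assms(1) Suc.prems by simp
    ultimately show ?thesis by simp
  qed simp
qed

lemma simplexS_Nil: "simplexS [] = {0}"
  by (auto simp: simplexS_def)

lemma zero_in_simplexS: "0 \<in> simplexS ws"
  unfolding simplexS_def by (rule CollectI, rule exI[of _ "\<lambda>_. 0"]) simp

lemma convex_simplexS: "convex (simplexS ws)"
proof (rule convexI)
  fix p q and u v :: real assume p: "p \<in> simplexS ws" and q: "q \<in> simplexS ws"
    and uv0: "0 \<le> u" "0 \<le> v" "u + v = 1"
  have uv: "0 \<le> u \<and> 0 \<le> v \<and> u + v = 1" using uv0 by simp
  obtain x where x: "p = (\<Sum>j<length ws. x j *\<^sub>R (ws ! j))" "\<forall>j<length ws. 0 \<le> x j \<and> x j \<le> 1"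
      "\<forall>j. Suc j < length ws \<longrightarrow> x (Suc j) \<le> x j" using p unfolding simplexS_def by auto
  obtain y where y: "q = (\<Sum>j<length ws. y j *\<^sub>R (ws ! j))" "\<forall>j<length ws. 0 \<le> y j \<and> y j \<le> 1"
      "\<forall>j. Suc j < length ws \<longrightarrow> y (Suc j) \<le> y j" using q unfolding simplexS_def by auto
  have cb: "u * s + v * t \<le> u * s' + v * t'" if "s \<le> s'" "t \<le> t'" for s s' t t' :: real
    using uv that by (intro add_mono mult_left_mono) auto
  have "u *\<^sub>R p + v *\<^sub>R q = (\<Sum>j<length ws. (u * x j + v * y j) *\<^sub>R (ws ! j))"
    by (simp add: x(1) y(1) scaleR_sum_right sum.distrib[symmetric] scaleR_add_left)
  moreover have "\<forall>j<length ws. 0 \<le> u * x j + v * y j \<and> u * x j + v * y j \<le> 1"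
  proof (intro allI impI conjI)
    fix j assume "j < length ws"
    then show "0 \<le> u * x j + v * y j" using cb[of 0 "x j" 0 "y j"] x(2) y(2) by auto
    show "u * x j + v * y j \<le> 1" using cb[of "x j" 1 "y j" 1] x(2) y(2) uv \<open>j < _\<close> by auto
  qed
  moreover have "\<forall>j. Suc j < length ws \<longrightarrow> u * x (Suc j) + v * y (Suc j) \<le> u * x j + v * y j"
    using cb x(3) y(3) by auto
  ultimately show "u *\<^sub>R p + v *\<^sub>R q \<in> simplexS ws" unfolding simplexS_def
    by (intro CollectI exI[of _ "\<lambda>j. u * x j + v * y j"]) simp
qed

lemma simplexS_Cons:
  "simplexS (w # ws) = (\<lambda>p. fst p *\<^sub>R (w + snd p)) ` ({0..1::real} \<times> simplexS ws)"
proof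
  show "simplexS (w # ws) \<subseteq> (\<lambda>p. fst p *\<^sub>R (w + snd p)) ` ({0..1} \<times> simplexS ws)"
  proof
    fix p assume "p \<in> simplexS (w # ws)"
    then obtain x where x: "p = (\<Sum>j<Suc (length ws). x j *\<^sub>R ((w#ws) ! j))"
      "\<forall>j<Suc (length ws). 0 \<le> x j \<and> x j \<le> 1"
      "\<forall>j. Suc j < Suc (length ws) \<longrightarrow> x (Suc j) \<le> x j" unfolding simplexS_def by auto
    define t where "t = x 0"
    define s where "s = (\<Sum>j<length ws. (x (Suc j) / t) *\<^sub>R (ws ! j))"
    have p: "p = t *\<^sub>R w + (\<Sum>j<length ws. x (Suc j) *\<^sub>R (ws ! j))"
      unfolding x(1) sum.lessThan_Suc_shift t_def by simp
    have le: "x (Suc j) \<le> t" if "j < length ws" for j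
      using dec_mono[OF x(3), of 0 "Suc j"] that by (simp add: t_def)
    have t01: "0 \<le> t" "t \<le> 1" using x(2) by (auto simp: t_def)
    have "s \<in> simplexS ws" unfolding simplexS_def
    proof (intro CollectI exI[of _ "\<lambda>j. x (Suc j) / t"] conjI allI impI)
      fix j assume j: "j < length ws"
      show "0 \<le> x (Suc j) / t" using x(2) j t01 by auto
      show "x (Suc j) / t \<le> 1"
        using le[OF j] t01 by (cases "t = 0") (auto simp: divide_le_eq_1)
    next
      fix j assume j: "Suc j < length ws"
      show "x (Suc (Suc j)) / t \<le> x (Suc j) / t"
        using x(3) j t01 by (auto intro: divide_right_mono)
    qed (simp add: s_def)
    moreover have "p = t *\<^sub>R (w + s)"
    proof (cases "t = 0")
      case True
      then have "x (Suc j) = 0" if "j < length ws" for j using le[OF that] x(2) that by force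
      then show ?thesis using True by (simp add: p s_def)
    next
      case False
      then show ?thesis by (simp add: p s_def scaleR_add_right scaleR_sum_right)
    qed
    ultimately show "p \<in> (\<lambda>p. fst p *\<^sub>R (w + snd p)) ` ({0..1} \<times> simplexS ws)"
      using t01 by (intro image_eqI[of _ _ "(t, s)"]) auto
  qed
next
  show "(\<lambda>p. fst p *\<^sub>R (w + snd p)) ` ({0..1} \<times> simplexS ws) \<subseteq> simplexS (w # ws)"
  proof clarify
    fix t :: real and s assume t: "t \<in> {0..1}" and s: "s \<in> simplexS ws"
    then obtain y where y: "s = (\<Sum>j<length ws. y j *\<^sub>R (ws ! j))"
      "\<forall>j<length ws. 0 \<le> y j \<and> y j \<le> 1"
      "\<forall>j. Suc j < length ws \<longrightarrow> y (Suc j) \<le> y j" unfolding simplexS_def by auto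
    define x where "x = (\<lambda>j. if j = 0 then t else t * y (j - 1))"
    have "t *\<^sub>R (w + s) = (\<Sum>j<length (w#ws). x j *\<^sub>R ((w#ws) ! j))"
      unfolding length_Cons sum.lessThan_Suc_shift
      by (simp add: x_def y(1) scaleR_add_right scaleR_sum_right)
    moreover have "\<forall>j<length (w#ws). 0 \<le> x j \<and> x j \<le> 1"
    proof (intro allI impI)
      fix j assume j: "j < length (w#ws)"
      show "0 \<le> x j \<and> x j \<le> 1"
      proof (cases j)
        case (Suc k)
        then have "0 \<le> y k" "y k \<le> 1" using y(2) j by auto
        then show ?thesis using t Suc by (auto simp: x_def mult_le_one)
      qed (use t in \<open>auto simp: x_def\<close>)
    qed
    moreover have "\<forall>j. Suc j < length (w#ws) \<longrightarrow> x (Suc j) \<le> x j"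
    proof (intro allI impI)
      fix j assume j: "Suc j < length (w#ws)"
      show "x (Suc j) \<le> x j"
      proof (cases j)
        case 0
        then show ?thesis using t y(2) j by (auto simp: x_def mult_left_le)
      next
        case (Suc k)
        then show ?thesis using t y(3) j by (auto simp: x_def intro: mult_left_mono)
      qed
    qed
    ultimately show "(\<lambda>p. fst p *\<^sub>R (w + snd p)) (t, s) \<in> simplexS (w # ws)"
      unfolding simplexS_def by (intro CollectI exI[of _ x]) simp
  qed
qed

lemma compact_simplexS: "compact (simplexS (ws :: 'a::real_normed_vector list))"
proof (induction ws)
  case Nil then show ?case by (simp add: simplexS_Nil)
next
  case (Cons w ws)
  have "continuous_on ({0..1::real} \<times> simplexS ws) (\<lambda>p. fst p *\<^sub>R (w + snd p))"
    by (intro continuous_intros)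
  then show ?case unfolding simplexS_Cons
    by (intro compact_continuous_image compact_Times Cons compact_Icc)
qed

definition Mset :: "nat \<Rightarrow> nat \<Rightarrow> nat \<Rightarrow> real \<Rightarrow> real \<Rightarrow> (nat \<Rightarrow> real) set" where
  "Mset d k i \<alpha> \<beta> = {y. (\<forall>j. d \<le> j \<longrightarrow> y j = 0) \<and> (\<forall>j<k. 0 \<le> y j \<and> y j \<le> \<alpha>)
     \<and> (\<forall>j. Suc j < k \<longrightarrow> y (Suc j) \<le> y j) \<and> (\<forall>j. k \<le> j \<and> j < i \<longrightarrow> y j = 0)
     \<and> (\<forall>j. i \<le> j \<and> j < d \<longrightarrow> 0 \<le> y j \<and> y j \<le> \<beta>)
     \<and> (\<forall>j. i \<le> j \<and> Suc j < d \<longrightarrow> y (Suc j) \<le> y j)}"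

lemma sum_split3:
  fixes f :: "nat \<Rightarrow> 'b::comm_monoid_add"
  assumes "k \<le> i" "i \<le> d"
  shows "(\<Sum>j<d. f j) = (\<Sum>j<k. f j) + (\<Sum>j\<in>{k..<i}. f j) + (\<Sum>j<d-i. f (i + j))"
proof -
  have "(\<Sum>j<d. f j) = (\<Sum>j\<in>{0..<k}. f j) + (\<Sum>j\<in>{k..<i}. f j) + (\<Sum>j\<in>{i..<d}. f j)"
    using assms by (simp add: atLeast0LessThan[symmetric] sum.atLeastLessThan_concat)
  moreover have "(\<Sum>j\<in>{i..<d}. f j) = (\<Sum>j<d-i. f (i + j))"
    using sum.shift_bounds_nat_ivl[of f 0 i "d - i"] assms
    by (simp add: atLeast0LessThan add.commute)
  ultimately show ?thesis by (simp add: atLeast0LessThan)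
qed

lemma M_lemma:
  assumes ki: "k \<le> i" and id: "i \<le> length vs" and pos: "\<alpha> > 0" "\<beta> > 0"
  shows "(*\<^sub>R) \<alpha> ` simplexS (take k vs) + (*\<^sub>R) \<beta> ` simplexS (drop i vs)
         = Lc vs ` Mset (length vs) k i \<alpha> \<beta>"
proof -
  let ?d = "length vs"
  have lt: "length (take k vs) = k" using ki id by simp
  have ld: "length (drop i vs) = ?d - i" by simp
  show ?thesis
  proof
    show "(*\<^sub>R) \<alpha> ` simplexS (take k vs) + (*\<^sub>R) \<beta> ` simplexS (drop i vs)
         \<subseteq> Lc vs ` Mset (length vs) k i \<alpha> \<beta>"
    proof
      fix p assume "p \<in> (*\<^sub>R) \<alpha> ` simplexS (take k vs) + (*\<^sub>R) \<beta> ` simplexS (drop i vs)"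
      then obtain q r where p: "p = \<alpha> *\<^sub>R q + \<beta> *\<^sub>R r" and q: "q \<in> simplexS (take k vs)"
        and r: "r \<in> simplexS (drop i vs)" by (auto elim!: set_plus_elim)
      obtain x where x: "q = (\<Sum>j<k. x j *\<^sub>R (vs ! j))" "\<forall>j<k. 0 \<le> x j \<and> x j \<le> 1"
        "\<forall>j. Suc j < k \<longrightarrow> x (Suc j) \<le> x j" using q unfolding simplexS_def lt by auto
      obtain z where z: "r = (\<Sum>j<?d-i. z j *\<^sub>R (vs ! (i + j)))" "\<forall>j<?d-i. 0 \<le> z j \<and> z j \<le> 1"
        "\<forall>j. Suc j < ?d-i \<longrightarrow> z (Suc j) \<le> z j" using r id unfolding simplexS_def ld by auto
      define y where "y = (\<lambda>j. if j < k then \<alpha> * x j else if j < i then 0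
                               else if j < ?d then \<beta> * z (j - i) else 0)"
      have "Lc vs y = (\<Sum>j<k. y j *\<^sub>R vs ! j) + (\<Sum>j\<in>{k..<i}. y j *\<^sub>R vs ! j)
                        + (\<Sum>j<?d-i. y (i + j) *\<^sub>R vs ! (i + j))"
        unfolding Lc_def by (rule sum_split3[OF ki id])
      also have "\<dots> = p"
      proof -
        have 1: "(\<Sum>j<k. y j *\<^sub>R vs ! j) = \<alpha> *\<^sub>R q"
          by (simp add: x(1) y_def scaleR_sum_right)
        have 2: "(\<Sum>j\<in>{k..<i}. y j *\<^sub>R vs ! j) = 0" by (simp add: y_def)
        have 3: "(\<Sum>j<?d-i. y (i + j) *\<^sub>R vs ! (i + j)) = \<beta> *\<^sub>R r"
          using ki by (auto simp: z(1) y_def scaleR_sum_right intro!: sum.cong)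
        show ?thesis by (simp add: 1 2 3 p)
      qed
      finally have L: "Lc vs y = p" .
      have "y \<in> Mset ?d k i \<alpha> \<beta>"
        unfolding Mset_def
      proof (intro CollectI conjI allI impI)
        fix j
        show "?d \<le> j \<Longrightarrow> y j = 0" using ki id by (simp add: y_def)
        show "j < k \<Longrightarrow> 0 \<le> y j" using x(2) pos by (simp add: y_def)
        show "j < k \<Longrightarrow> y j \<le> \<alpha>" using x(2) pos by (simp add: y_def mult_left_le)
        show "Suc j < k \<Longrightarrow> y (Suc j) \<le> y j" using x(3) pos by (simp add: y_def)
        show "k \<le> j \<and> j < i \<Longrightarrow> y j = 0" by (simp add: y_def)
        show "0 \<le> y j" "y j \<le> \<beta>" if j: "i \<le> j \<and> j < ?d"
        proof -
          have "0 \<le> z (j - i) \<and> z (j - i) \<le> 1" using z(2) j by auto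
          then show "0 \<le> y j" "y j \<le> \<beta>" using j pos ki by (auto simp: y_def mult_left_le)
        qed
        assume j: "i \<le> j \<and> Suc j < ?d"
        then have "Suc (j - i) < ?d - i" by linarith
        then have "z (Suc (j - i)) \<le> z (j - i)" using z(3) by blast
        moreover have "Suc j - i = Suc (j - i)" using j by linarith
        ultimately show "y (Suc j) \<le> y j" using j pos ki by (simp add: y_def)
      qed
      then show "p \<in> Lc vs ` Mset (length vs) k i \<alpha> \<beta>" using L by blast
    qed
  next
    show "Lc vs ` Mset (length vs) k i \<alpha> \<beta>
      \<subseteq> (*\<^sub>R) \<alpha> ` simplexS (take k vs) + (*\<^sub>R) \<beta> ` simplexS (drop i vs)"
    proof clarify
      fix y assume y: "y \<in> Mset (length vs) k i \<alpha> \<beta>"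
      define q where "q = (\<Sum>j<k. (y j / \<alpha>) *\<^sub>R (vs ! j))"
      define r where "r = (\<Sum>j<?d-i. (y (i + j) / \<beta>) *\<^sub>R (vs ! (i + j)))"
      have q: "q \<in> simplexS (take k vs)" unfolding simplexS_def lt
      proof (intro CollectI exI[of _ "\<lambda>j. y j / \<alpha>"] conjI allI impI)
        show "q = (\<Sum>j<k. (y j / \<alpha>) *\<^sub>R take k vs ! j)" by (simp add: q_def)
      qed (use y pos in \<open>auto simp: Mset_def divide_right_mono\<close>)
      have r: "r \<in> simplexS (drop i vs)" unfolding simplexS_def ld
      proof (intro CollectI exI[of _ "\<lambda>j. y (i + j) / \<beta>"] conjI allI impI)
        show "r = (\<Sum>j<?d-i. (y (i + j) / \<beta>) *\<^sub>R drop i vs ! j)" using id by (simp add: r_def)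
      next
        fix j assume "j < ?d - i"
        then show "0 \<le> y (i + j) / \<beta>" "y (i + j) / \<beta> \<le> 1" using y pos by (auto simp: Mset_def)
      next
        fix j assume "Suc j < ?d - i"
        then show "y (i + Suc j) / \<beta> \<le> y (i + j) / \<beta>"
          using y pos by (auto simp: Mset_def divide_right_mono)
      qed
      have "Lc vs y = (\<Sum>j<k. y j *\<^sub>R vs ! j) + (\<Sum>j\<in>{k..<i}. y j *\<^sub>R vs ! j)
                        + (\<Sum>j<?d-i. y (i + j) *\<^sub>R vs ! (i + j))"
        unfolding Lc_def by (rule sum_split3[OF ki id])
      also have "\<dots> = \<alpha> *\<^sub>R q + \<beta> *\<^sub>R r"
        using y pos by (simp add: Mset_def q_def r_def scaleR_sum_right)
      finally show "Lc vs y \<in> (*\<^sub>R) \<alpha> ` simplexS (take k vs) + (*\<^sub>R) \<beta> ` simplexS (drop i vs)"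
        using q r by auto
    qed
  qed
qed

lemma trans_lemma:
  assumes "S = Lc vs ` M" "\<And>y. y \<in> N \<longleftrightarrow> (\<lambda>j. y j - c j) \<in> M"
  shows "S + {Lc vs c} = Lc vs ` N"
proof
  show "S + {Lc vs c} \<subseteq> Lc vs ` N"
  proof
    fix p assume "p \<in> S + {Lc vs c}"
    then obtain y where y: "y \<in> M" "p = Lc vs y + Lc vs c"
      using assms(1) by (auto elim!: set_plus_elim)
    have "(\<lambda>j. y j + c j) \<in> N" using assms(2) y(1) by simp
    moreover have "p = Lc vs (\<lambda>j. y j + c j)" using y(2) by (simp add: Lc_add)
    ultimately show "p \<in> Lc vs ` N" by blast
  qed
next
  show "Lc vs ` N \<subseteq> S + {Lc vs c}"
  proof
    fix p assume "p \<in> Lc vs ` N"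
    then obtain y where y: "y \<in> N" "p = Lc vs y" by auto
    have "(\<lambda>j. y j - c j) \<in> M" using assms(2) y(1) by simp
    moreover have "p = Lc vs (\<lambda>j. y j - c j) + Lc vs c" using y(2) by (simp add: Lc_diff)
    ultimately show "p \<in> S + {Lc vs c}" using assms(1) by auto
  qed
qed

lemma Lc_cvec:
  assumes "i \<le> length vs"
  shows "Lc vs (\<lambda>j. if j < i then b else 0) = b *\<^sub>R sum_list (take i vs)"
proof -
  have "Lc vs (\<lambda>j. if j < i then b else 0) = (\<Sum>j<i. (if j < i then b else 0) *\<^sub>R vs ! j)
     + (\<Sum>j\<in>{i..<i}. (if j < i then b else 0) *\<^sub>R vs ! j)
     + (\<Sum>j<length vs - i. (if i + j < i then b else 0) *\<^sub>R vs ! (i + j))"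
    unfolding Lc_def by (rule sum_split3) (use assms in auto)
  also have "\<dots> = (\<Sum>j<i. b *\<^sub>R vs ! j)" by simp
  also have "\<dots> = b *\<^sub>R sum_list (take i vs)"
    using assms by (simp add: sum_list_sum_nth scaleR_sum_right atLeast0LessThan)
  finally show ?thesis .
qed

definition Full :: "nat \<Rightarrow> real \<Rightarrow> (nat \<Rightarrow> real) set" where
  "Full d c = {y. (\<forall>j. d \<le> j \<longrightarrow> y j = 0) \<and> (\<forall>j<d. 0 \<le> y j \<and> y j \<le> c)
      \<and> (\<forall>j. Suc j < d \<longrightarrow> y (Suc j) \<le> y j)}"

definition Ac :: "nat \<Rightarrow> real \<Rightarrow> real \<Rightarrow> nat \<Rightarrow> (nat \<Rightarrow> real) set" where
  "Ac d a b i = {y \<in> Full d (a + b). (\<forall>j<i. b \<le> y j) \<and> (\<forall>j. i \<le> j \<and> j < d \<longrightarrow> y j \<le> b)}"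

definition Uc :: "nat \<Rightarrow> real \<Rightarrow> real \<Rightarrow> nat \<Rightarrow> (nat \<Rightarrow> real) set" where
  "Uc d a b i = {y \<in> Full d (a + b). (\<forall>j. i \<le> j \<and> j < d \<longrightarrow> y j \<le> b)}"

definition Bc :: "nat \<Rightarrow> real \<Rightarrow> real \<Rightarrow> nat \<Rightarrow> (nat \<Rightarrow> real) set" where
  "Bc d a b i = {y \<in> Ac d a b i. y (i - 1) = b}"

lemma Ac_iff:
  assumes "i \<le> d" "a > 0" "b > 0"
  shows "y \<in> Ac d a b i \<longleftrightarrow> (\<lambda>j. y j - (if j < i then b else 0)) \<in> Mset d i i a b"
proof
  assume "y \<in> Ac d a b i"
  moreover have "\<And>j. j < i \<Longrightarrow> y j - b \<le> a" using \<open>y \<in> Ac d a b i\<close> assms(1)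
    unfolding Ac_def Full_def by (smt (verit) less_le_trans mem_Collect_eq)
  ultimately show "(\<lambda>j. y j - (if j < i then b else 0)) \<in> Mset d i i a b"
    using assms by (auto simp: Ac_def Full_def Mset_def)
next
  assume m: "(\<lambda>j. y j - (if j < i then b else 0)) \<in> Mset d i i a b"
  have bd: "y (Suc j) \<le> y j" if "Suc j < d" for j
  proof -
    consider "Suc j < i" | "Suc j = i" | "i \<le> j" by linarith
    then show ?thesis
    proof cases
      case 1 then show ?thesis using m by (auto simp: Mset_def)
    next
      case 2
      then have "y (Suc j) \<le> b" "b \<le> y j" using m that assms
        by (auto simp: Mset_def)
      then show ?thesis by simp
    next
      case 3 then show ?thesis using m that by (auto simp: Mset_def)
    qed
  qed
  show "y \<in> Ac d a b i"
    using m assms bd unfolding Ac_def Full_def Mset_def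
    apply (auto split: if_splits)
    subgoal premises p for j
    proof (cases "j < i")
      case True then show ?thesis using p(3,6) by fastforce
    next
      case False then have "i \<le> j" by simp
      then show ?thesis using p(7,8) by blast
    qed
    subgoal premises p for j
    proof (cases "j < i")
      case True then show ?thesis using p(6) by fastforce
    next
      case False then have "i \<le> j" by simp
      then have "y j \<le> b" using p(7,8) by blast
      then show ?thesis using p(2) by linarith
    qed
    done
qed

lemma Mset_shift:
  assumes "1 \<le> i" "a > 0"
  shows "z \<in> Mset d (i - 1) i a b \<longleftrightarrow> z \<in> Mset d i i a b \<and> z (i - 1) = 0"
proof
  assume m: "z \<in> Mset d (i - 1) i a b"
  have "z (Suc j) \<le> z j" if "Suc j < i" for j
  proof (cases "Suc j < i - 1")
    case True then show ?thesis using m by (auto simp: Mset_def)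
  next
    case False
    then have "Suc j = i - 1" using that by simp
    then show ?thesis using m assms by (auto simp: Mset_def)
  qed
  moreover have "0 \<le> z j \<and> z j \<le> a" if "j < i" for j
  proof (cases "j < i - 1")
    case True then show ?thesis using m by (auto simp: Mset_def)
  next
    case False
    then have "j = i - 1" using that by simp
    then show ?thesis using m assms that by (auto simp: Mset_def)
  qed
  ultimately show "z \<in> Mset d i i a b \<and> z (i - 1) = 0" using m assms by (auto simp: Mset_def)
next
  assume h: "z \<in> Mset d i i a b \<and> z (i - 1) = 0"
  show "z \<in> Mset d (i - 1) i a b"
    unfolding Mset_def
  proof (intro CollectI conjI allI impI)
    fix j
    show "d \<le> j \<Longrightarrow> z j = 0" using h by (simp add: Mset_def)
    show "0 \<le> z j" "z j \<le> a" if "j < i - 1"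
      using h that by (simp_all add: Mset_def)
    show "z (Suc j) \<le> z j" if "Suc j < i - 1" using h that by (simp add: Mset_def)
    show "z j = 0" if "i - 1 \<le> j \<and> j < i"
    proof -
      have "j = i - 1" using that by linarith
      then show ?thesis using h by simp
    qed
    show "0 \<le> z j" "z j \<le> b" if "i \<le> j \<and> j < d" using h that by (simp_all add: Mset_def)
    show "z (Suc j) \<le> z j" if "i \<le> j \<and> Suc j < d" using h that by (simp add: Mset_def)
  qed
qed

lemma Bc_iff:
  assumes "1 \<le> i" "i \<le> d" "a > 0" "b > 0"
  shows "y \<in> Bc d a b i \<longleftrightarrow> (\<lambda>j. y j - (if j < i then b else 0)) \<in> Mset d (i - 1) i a b"
  using Ac_iff[OF assms(2-4), of y] Mset_shift[OF assms(1,3)] assms(1)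
  by (auto simp: Bc_def)

lemma Full_eq: "Mset d d d c 1 = Full d c"
  by (auto simp: Mset_def Full_def)

lemma Uc_union:
  assumes "i \<le> d"
  shows "Uc d a b i = (\<Union>j\<in>{0..i}. Ac d a b j)"
proof
  show "(\<Union>j\<in>{0..i}. Ac d a b j) \<subseteq> Uc d a b i"
    by (auto simp: Ac_def Uc_def)
next
  show "Uc d a b i \<subseteq> (\<Union>j\<in>{0..i}. Ac d a b j)"
  proof
    fix y assume y: "y \<in> Uc d a b i"
    define P where "P = (\<lambda>j. j = d \<or> (j < d \<and> y j \<le> b))"
    define j0 where "j0 = (LEAST j. P j)"
    have Pi: "P i" using y assms by (auto simp: P_def Uc_def)
    have j0i: "j0 \<le> i" unfolding j0_def using Pi by (rule Least_le)
    have Pj0: "P j0" unfolding j0_def using Pi by (rule LeastI)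
    have low: "b \<le> y k" if "k < j0" for k
    proof -
      have "\<not> P k" using that not_less_Least unfolding j0_def by blast
      moreover have "k < d" using that j0i assms by simp
      ultimately show ?thesis by (simp add: P_def)
    qed
    have high: "y k \<le> b" if "j0 \<le> k" "k < d" for k
    proof -
      have "j0 < d" using that by simp
      then have "y j0 \<le> b" using Pj0 by (simp add: P_def)
      moreover have "y k \<le> y j0" using y that by (intro dec_mono[of d y]) (auto simp: Uc_def Full_def)
      ultimately show ?thesis by simp
    qed
    have "y \<in> Ac d a b j0" using y low high by (auto simp: Ac_def Uc_def)
    then show "y \<in> (\<Union>j\<in>{0..i}. Ac d a b j)" using j0i by auto
  qed
qed

lemma Ac_int:
  assumes "1 \<le> i" "i \<le> d"
  shows "(\<Union>j\<in>{0..<i}. Ac d a b j) \<inter> Ac d a b i = Bc d a b i"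
proof
  show "(\<Union>j\<in>{0..<i}. Ac d a b j) \<inter> Ac d a b i \<subseteq> Bc d a b i"
  proof
    fix y assume "y \<in> (\<Union>j\<in>{0..<i}. Ac d a b j) \<inter> Ac d a b i"
    then obtain j where j: "j < i" "y \<in> Ac d a b j" and yi: "y \<in> Ac d a b i" by auto
    have "b \<le> y (i - 1)" using yi assms by (auto simp: Ac_def)
    moreover have "y (i - 1) \<le> b"
    proof -
      have "j \<le> i - 1" "i - 1 < d" using j(1) assms by auto
      then show ?thesis using j(2) unfolding Ac_def by blast
    qed
    ultimately show "y \<in> Bc d a b i" using yi by (auto simp: Bc_def)
  qed
next
  show "Bc d a b i \<subseteq> (\<Union>j\<in>{0..<i}. Ac d a b j) \<inter> Ac d a b i"
  proof
    fix y assume y: "y \<in> Bc d a b i"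
    have "y \<in> Ac d a b (i - 1)"
    proof -
      have "y k \<le> b" if "i - 1 \<le> k" "k < d" for k
      proof (cases "k = i - 1")
        case True then show ?thesis using y by (simp add: Bc_def)
      next
        case False then have "i \<le> k" using that by simp
        then show ?thesis using y that by (auto simp: Bc_def Ac_def)
      qed
      then show ?thesis using y by (auto simp: Bc_def Ac_def)
    qed
    then show "y \<in> (\<Union>j\<in>{0..<i}. Ac d a b j) \<inter> Ac d a b i"
      using y assms by (auto simp: Bc_def intro!: bexI[of _ "i - 1"])
  qed
qed

lemma set_plus_eq_sums: "S + T = {x + y | x y. x \<in> S \<and> y \<in> T}"
  by (auto simp: set_plus_def)

lemma set_plus_single:
  fixes S :: "'a::ab_semigroup_add set"
  shows "S + {p} = (\<lambda>y. p + y) ` S"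
proof (intro set_eqI iffI)
  fix x assume "x \<in> S + {p}"
  then obtain s where "s \<in> S" "x = s + p" by (auto elim!: set_plus_elim)
  then have "x = p + s" "s \<in> S" by (simp_all add: add.commute)
  then show "x \<in> (\<lambda>y. p + y) ` S" by blast
next
  fix x assume "x \<in> (\<lambda>y. p + y) ` S"
  then obtain s where "s \<in> S" "x = p + s" by auto
  then show "x \<in> S + {p}" by (metis add.commute set_plus_intro singletonI)
qed

lemma Kset_sum:
  fixes xs ys :: "'a::real_normed_vector list"
  shows "(*\<^sub>R) \<alpha> ` simplexS xs + (*\<^sub>R) \<beta> ` simplexS ys \<in> Kset"
proof -
  have c1: "compact ((*\<^sub>R) \<alpha> ` simplexS xs)" "compact ((*\<^sub>R) \<beta> ` simplexS ys)"
    using compact_scaling[OF compact_simplexS] by auto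
  have "convex ((*\<^sub>R) \<alpha> ` simplexS xs)" "convex ((*\<^sub>R) \<beta> ` simplexS ys)"
    using convex_scaling[OF convex_simplexS] by auto
  moreover have "0 \<in> (*\<^sub>R) \<alpha> ` simplexS xs + (*\<^sub>R) \<beta> ` simplexS ys"
    using zero_in_simplexS by (metis add_0 image_eqI scaleR_zero_right set_plus_intro)
  ultimately show ?thesis unfolding Kset_def
    using compact_sums[OF c1] convex_set_plus by (auto simp: set_plus_eq_sums[symmetric])
qed

lemma Kset_translate: "K \<in> Kset \<Longrightarrow> K + {p} \<in> Kset"
  unfolding Kset_def set_plus_single
  by (auto intro: compact_translation convex_translation)

lemma convex_Lc_Uc: "convex (Lc vs ` Uc d a b i)"
proof (rule convexI)
  fix p q and u v :: real assume p: "p \<in> Lc vs ` Uc d a b i" and q: "q \<in> Lc vs ` Uc d a b i"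
    and uv: "0 \<le> u" "0 \<le> v" "u + v = 1"
  obtain x where x: "x \<in> Uc d a b i" "p = Lc vs x" using p by auto
  obtain y where y: "y \<in> Uc d a b i" "q = Lc vs y" using q by auto
  have cb: "u * s + v * t \<le> u * s' + v * t'" if "s \<le> s'" "t \<le> t'" for s s' t t' :: real
    using uv that by (intro add_mono mult_left_mono) auto
  have cb2: "u * s + v * t \<le> c" if "s \<le> c" "t \<le> c" for s t c :: real
    using cb[OF that] uv by (simp add: distrib_right[symmetric])
  have cb3: "c \<le> u * s + v * t" if "c \<le> s" "c \<le> t" for s t c :: real
    using cb[OF that] uv by (simp add: distrib_right[symmetric])
  have "u *\<^sub>R p + v *\<^sub>R q = Lc vs (\<lambda>j. u * x j + v * y j)"
    by (simp add: x(2) y(2) Lc_add Lc_scale)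
  moreover have "(\<lambda>j. u * x j + v * y j) \<in> Uc d a b i"
  proof -
    have z: "\<forall>j. d \<le> j \<longrightarrow> u * x j + v * y j = 0" using x(1) y(1) by (simp add: Uc_def Full_def)
    have bd: "\<forall>j<d. 0 \<le> u * x j + v * y j \<and> u * x j + v * y j \<le> a + b"
      using x(1) y(1) by (auto simp: Uc_def Full_def intro!: cb2 cb3)
    have dc: "\<forall>j. Suc j < d \<longrightarrow> u * x (Suc j) + v * y (Suc j) \<le> u * x j + v * y j"
      using x(1) y(1) by (auto simp: Uc_def Full_def intro!: cb)
    have hb: "\<forall>j. i \<le> j \<and> j < d \<longrightarrow> u * x j + v * y j \<le> b"
      using x(1) y(1) by (auto simp: Uc_def Full_def intro!: cb2)
    show ?thesis using z bd dc hb by (simp add: Uc_def Full_def)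
  qed
  ultimately show "u *\<^sub>R p + v *\<^sub>R q \<in> Lc vs ` Uc d a b i" by blast
qed

theorem lemma4p2:
  fixes vs :: "'a::euclidean_space list" and a b :: real
    and \<phi> :: "'a set \<Rightarrow> 'g::ab_group_add"
  assumes "distinct vs" and "independent (set vs)"
    and "a > 0" and "b > 0"
  defines "d \<equiv> length vs"
  defines "\<sigma> \<equiv> \<lambda>i. simplexS (take i vs)"
  defines "\<tau> \<equiv> \<lambda>i. simplexS (drop i vs)"
  defines "A \<equiv> \<lambda>i. (*\<^sub>R) a ` \<sigma> i + (*\<^sub>R) b ` \<tau> i + {b *\<^sub>R sum_list (take i vs)}"
  defines "B \<equiv> \<lambda>i. (*\<^sub>R) a ` \<sigma> (i - 1) + (*\<^sub>R) b ` \<tau> i + {b *\<^sub>R sum_list (take i vs)}"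
  shows "(*\<^sub>R) (a + b) ` \<sigma> d = (\<Union>i\<in>{0..d}. A i)
    \<and> (\<forall>i\<in>{1..d}. (\<Union>j\<in>{0..<i}. A j) \<inter> A i = B i)
    \<and> (is_valuation \<phi> \<and> translation_invariant \<phi> \<longrightarrow>
           \<phi> ((*\<^sub>R) (a + b) ` \<sigma> d) =
             (\<Sum>i=0..d. \<phi> ((*\<^sub>R) a ` \<sigma> i + (*\<^sub>R) b ` \<tau> i))
           - (\<Sum>i=1..d. \<phi> ((*\<^sub>R) a ` \<sigma> (i - 1) + (*\<^sub>R) b ` \<tau> i)))"
proof -
  define D where "D = {y :: nat \<Rightarrow> real. \<forall>j. d \<le> j \<longrightarrow> y j = 0}"
  have inj: "inj_on (Lc vs) D"
  proof (rule inj_onI)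
    fix y y' assume h: "y \<in> D" "y' \<in> D" "Lc vs y = Lc vs y'"
    show "y = y'"
    proof (rule ext)
      fix j show "y j = y' j"
      proof (cases "j < d")
        case True then show ?thesis using Lc_inj[OF assms(1,2) h(3)] by (simp add: d_def)
      next
        case False then show ?thesis using h(1,2) by (simp add: D_def)
      qed
    qed
  qed
  have AcD: "Ac d a b i \<subseteq> D" for i by (auto simp: Ac_def Full_def D_def)
  have BcD: "Bc d a b i \<subseteq> D" for i using AcD by (auto simp: Bc_def)
  have S0: "(*\<^sub>R) (1::real) ` simplexS (drop d vs) = {0}"
    by (simp add: d_def simplexS_Nil)
  have F1: "(*\<^sub>R) (a + b) ` \<sigma> d = Lc vs ` Full d (a + b)"
    using M_lemma[of d d vs "a + b" 1] assms(3,4) S0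
    by (simp add: Full_eq \<sigma>_def d_def set_plus_single)
  have FA: "A i = Lc vs ` Ac d a b i" if "i \<le> d" for i
  proof -
    have "A i = ((*\<^sub>R) a ` \<sigma> i + (*\<^sub>R) b ` \<tau> i) + {Lc vs (\<lambda>j. if j < i then b else 0)}"
      using that by (simp add: A_def Lc_cvec d_def)
    also have "\<dots> = Lc vs ` Ac d a b i"
    proof (rule trans_lemma)
      show "(*\<^sub>R) a ` \<sigma> i + (*\<^sub>R) b ` \<tau> i = Lc vs ` Mset d i i a b"
        using M_lemma[of i i vs a b] that assms(3,4) by (simp add: \<sigma>_def \<tau>_def d_def)
      show "y \<in> Ac d a b i \<longleftrightarrow> (\<lambda>j. y j - (if j < i then b else 0)) \<in> Mset d i i a b" for y
        by (rule Ac_iff[OF that assms(3,4)])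
    qed
    finally show ?thesis .
  qed
  have FB: "B i = Lc vs ` Bc d a b i" if "1 \<le> i" "i \<le> d" for i
  proof -
    have "B i = ((*\<^sub>R) a ` \<sigma> (i - 1) + (*\<^sub>R) b ` \<tau> i) + {Lc vs (\<lambda>j. if j < i then b else 0)}"
      using that by (simp add: B_def Lc_cvec d_def)
    also have "\<dots> = Lc vs ` Bc d a b i"
    proof (rule trans_lemma)
      show "(*\<^sub>R) a ` \<sigma> (i - 1) + (*\<^sub>R) b ` \<tau> i = Lc vs ` Mset d (i - 1) i a b"
        using M_lemma[of "i - 1" i vs a b] that assms(3,4) by (simp add: \<sigma>_def \<tau>_def d_def)
      show "y \<in> Bc d a b i \<longleftrightarrow> (\<lambda>j. y j - (if j < i then b else 0)) \<in> Mset d (i - 1) i a b" for y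
        by (rule Bc_iff[OF that assms(3,4)])
    qed
    finally show ?thesis .
  qed
  have FU: "(\<Union>j\<in>{0..i}. A j) = Lc vs ` Uc d a b i" if "i \<le> d" for i
  proof -
    have "(\<Union>j\<in>{0..i}. A j) = (\<Union>j\<in>{0..i}. Lc vs ` Ac d a b j)" using FA that by auto
    also have "\<dots> = Lc vs ` (\<Union>j\<in>{0..i}. Ac d a b j)" by (rule image_UN[symmetric])
    also have "\<dots> = Lc vs ` Uc d a b i" using Uc_union[OF that] by simp
    finally show ?thesis .
  qed
  have P1: "(*\<^sub>R) (a + b) ` \<sigma> d = (\<Union>i\<in>{0..d}. A i)"
  proof -
    have "Full d (a + b) = Uc d a b d" by (auto simp: Uc_def)
    then show ?thesis using F1 FU[of d] by simp
  qed
  have P2: "(\<Union>j\<in>{0..<i}. A j) \<inter> A i = B i" if "1 \<le> i" "i \<le> d" for i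
  proof -
    have "(\<Union>j\<in>{0..<i}. A j) = Lc vs ` (\<Union>j\<in>{0..<i}. Ac d a b j)"
      using FA that by (auto simp: image_UN)
    then have "(\<Union>j\<in>{0..<i}. A j) \<inter> A i
        = Lc vs ` ((\<Union>j\<in>{0..<i}. Ac d a b j) \<inter> Ac d a b i)"
    proof -
      have sub: "(\<Union>j\<in>{0..<i}. Ac d a b j) \<subseteq> D" using AcD by blast
      have "Lc vs ` ((\<Union>j\<in>{0..<i}. Ac d a b j) \<inter> Ac d a b i)
          = Lc vs ` (\<Union>j\<in>{0..<i}. Ac d a b j) \<inter> Lc vs ` Ac d a b i"
        by (rule inj_on_image_Int[OF inj sub AcD[of i]])
      then show ?thesis using FA[of i] that \<open>(\<Union>j\<in>{0..<i}. A j) = _\<close> by simp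
    qed
    also have "\<dots> = Lc vs ` Bc d a b i" using Ac_int[OF that] by simp
    finally show ?thesis using FB[OF that] by simp
  qed
  have P3: "\<phi> ((*\<^sub>R) (a + b) ` \<sigma> d) =
             (\<Sum>i=0..d. \<phi> ((*\<^sub>R) a ` \<sigma> i + (*\<^sub>R) b ` \<tau> i))
           - (\<Sum>i=1..d. \<phi> ((*\<^sub>R) a ` \<sigma> (i - 1) + (*\<^sub>R) b ` \<tau> i))"
    if val: "is_valuation \<phi>" and ti: "translation_invariant \<phi>"
  proof -
    define K where "K = (\<lambda>i. (*\<^sub>R) a ` \<sigma> i + (*\<^sub>R) b ` \<tau> i)"
    define K' where "K' = (\<lambda>i. (*\<^sub>R) a ` \<sigma> (i - 1) + (*\<^sub>R) b ` \<tau> i)"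
    have KK: "K i \<in> Kset" "K' i \<in> Kset" for i
      unfolding K_def K'_def \<sigma>_def \<tau>_def by (rule Kset_sum)+
    have AK: "A i = K i + {b *\<^sub>R sum_list (take i vs)}" for i by (simp add: A_def K_def)
    have BK: "B i = K' i + {b *\<^sub>R sum_list (take i vs)}" for i by (simp add: B_def K'_def)
    have AS: "A i \<in> Kset" "B i \<in> Kset" for i
      unfolding AK BK by (rule Kset_translate[OF KK(1)] Kset_translate[OF KK(2)])+
    have phiA: "\<phi> (A i) = \<phi> (K i)" "\<phi> (B i) = \<phi> (K' i)" for i
      using ti KK unfolding translation_invariant_def AK BK set_plus_single by auto
    define U where "U = (\<lambda>i. \<Union>j\<in>{0..i}. A j)"
    have US: "U i \<in> Kset" if "i \<le> d" for i
    proof -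
      have "A 0 \<subseteq> U i" by (auto simp: U_def)
      moreover have "A 0 \<noteq> {}" using AS(1)[of 0] by (simp add: Kset_def)
      ultimately have "U i \<noteq> {}" by auto
      moreover have "compact (U i)" unfolding U_def
        using AS(1) by (intro compact_UN) (auto simp: Kset_def)
      moreover have "convex (U i)" unfolding U_def FU[OF that] by (rule convex_Lc_Uc)
      ultimately show ?thesis by (simp add: Kset_def)
    qed
    have ind: "\<phi> (U i) = (\<Sum>j=0..i. \<phi> (K j)) - (\<Sum>j=1..i. \<phi> (K' j))" if "i \<le> d" for i
      using that
    proof (induction i)
      case 0
      then show ?case by (simp add: U_def phiA)
    next
      case (Suc i)
      have U1: "U (Suc i) = U i \<union> A (Suc i)" by (auto simp: U_def atLeast0_atMost_Suc)
      have I: "U i \<inter> A (Suc i) = B (Suc i)"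
        using P2[of "Suc i"] Suc.prems unfolding U_def
        by (simp add: atLeastLessThanSuc_atLeastAtMost)
      have "\<phi> (U (Suc i)) = \<phi> (U i) + \<phi> (A (Suc i)) - \<phi> (U i \<inter> A (Suc i))"
        using val US[of i] US[of "Suc i"] AS(1)[of "Suc i"] Suc.prems U1
        unfolding is_valuation_def by simp
      then show ?case using Suc.IH Suc.prems I phiA by simp
    qed
    show ?thesis using ind[of d] P1 unfolding U_def K_def K'_def by simp
  qed
  show ?thesis using P1 P2 P3 by auto
qed

end
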